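(* Let $\mathbb{A}$, $\mathbb{S}$ and $\mathbb{B}$ be complete Banach spaces with norms $\|\cdot\|_{\mathbb{A}},\|\cdot\|_{\mathbb{S}},\|\cdot\|_{\mathbb{B}}$, where $\mathbb{A}$ is compact, $\mathbb{S}$ is separable, and $\mathbb{B}_0\subset\mathbb{B}$ is separable. Let $\mathcal{X}\subset\mathbb{A}\times\mathbb{S}$ be closed. Let $P(\cdot\mid s,a)$ be a transition kernel such that for every $(a,s)\in\mathcal{X}$ a draw $S'(s,a)\sim P(\cdot\mid s,a)$ lies in $\mathbb{S}$ with probability one. For every $((a,s),s')\in\mathcal{X}\times\mathbb{S}$ let $\tilde R(s,a,s')$ be a random reward with $P(\tilde R(s,a,s')\in\mathbb{B}_0)=1$, drawn independently each time it is drawn. Let $\pi$ be a feasible policy, writing $\pi(s')$ for the action it selects at state $s'$, where feasibility means $(\pi(s'),s')\in\mathcal{X}$ (almost surely) for every $s'\in\mathbb{S}$. Let $0\le\gamma<1$. For $j=1,2$ and every $(a,s)\in\mathcal{X}$ let $V_j^*(s,a)$ be a random variable taking values in $\mathbb{B}_0$ with probability one, and define $$Z_j^*(s,a)=\tilde R\big(s,a,S'(s,a)\big)+\gamma\, V_j^*\Big(S'(s,a),\pi\big(S'(s,a)\big)\Big),$$ where, conditionally on $S'(s,a)=s'$, the reward $\tilde R(s,a,s')$ is independent of $V_j^*(s',\pi(s'))$. Then $$\sup_{(a,s)\in\mathcal{X}} d_{BL_1^*}\big(Z_1^*(s,a),Z_2^*(s,a)\big)\le \gamma\sup_{(a,s)\in\mathcal{X}}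 d_{BL_1^*}\big(V_1^*(s,a),V_2^*(s,a)\big).$$
   Context: $BL_1^*(\mathbb{B}_0)$ denotes the set of all functions $f:\mathbb{B}_0\to\mathbb{R}$ with Lipschitz seminorm $\sup_{x\neq y}|f(x)-f(y)|/\|x-y\|_{\mathbb{B}}\le 1$. For random variables $U,V$ with values in $\mathbb{B}_0$ (identified with their laws), $d_{BL_1^*}(U,V)=\sup_{f\in BL_1^*(\mathbb{B}_0)}\big(E f(U)-E f(V)\big)$; by the Kantorovich–Rubinstein theorem this equals the $1$-Wasserstein distance $\inf_{\lambda}E_\lambda\|U-V\|_{\mathbb{B}}$ over couplings $\lambda$ of the two laws. *)

theory Defs
  imports "HOL-Probability.Probability"
begin

definition dBL :: "'b::real_normed_vector measure \<Rightarrow> 'b measure \<Rightarrow> ereal" where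
  "dBL U V = (SUP f \<in> {f. 1-lipschitz_on UNIV f \<and> integrable U f \<and> integrable V f}.
                ereal (integral\<^sup>L U f - integral\<^sup>L V f))"

text \<open>Law of Z(s,a) = R(s,a,S') + gamma * V(S', pi S') with S' ~ P(s,a), and,
  conditionally on S' = s', the reward independent of V(s', pi s') (product law).
  The completion makes the sum map measurable also when the space is not separable
  (the laws are concentrated on a separable subset).\<close>
definition Zlaw ::
  "('s \<Rightarrow> 'a \<Rightarrow> 's measure) \<Rightarrow> ('s \<Rightarrow> 'a \<Rightarrow> 's \<Rightarrow> 'b::real_normed_vector measure)
   \<Rightarrow> ('s \<Rightarrow> 'a \<Rightarrow> 'b measure) \<Rightarrow> ('s \<Rightarrow> 'a) \<Rightarrow> real \<Rightarrow> 's \<Rightarrow> 'a \<Rightarrow> 'b measure" where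
  "Zlaw P R V \<pi> \<gamma> s a =
     P s a \<bind> (\<lambda>s'. distr (completion (R s a s' \<Otimes>\<^sub>M V s' (\<pi> s'))) borel
                         (\<lambda>(r, v). r + \<gamma> *\<^sub>R v))"

end

theory Submission
  imports Defs
begin


lemma rect_approx:
  fixes D C :: "'b::real_normed_vector set" and g :: "'b \<times> 'b \<Rightarrow> 'c::topological_space"
  assumes D: "countable D" and C: "C \<subseteq> closure D" and g: "continuous_on UNIV g" and S: "open S"
  shows "\<exists>U \<in> sets (borel \<Otimes>\<^sub>M borel). g -` S \<inter> (C \<times> C) = U \<inter> (C \<times> C)"
proof -
  define r :: "nat \<Rightarrow> real" where "r n = 1 / Suc n" for n
  define Q where "Q = (\<lambda>(d1,d2,n). if ball d1 (r n) \<times> ball d2 (r n) \<subseteq> g -` S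
      then ball d1 (r n) \<times> ball d2 (r n) else {})"
  define U where "U = \<Union> (Q ` (D \<times> D \<times> UNIV))"
  have "U \<in> sets (borel \<Otimes>\<^sub>M borel)"
    unfolding U_def
  proof (rule sets.countable_UN'')
    show "countable (D \<times> D \<times> (UNIV::nat set))" using D by simp
    fix i assume "i \<in> D \<times> D \<times> (UNIV::nat set)"
    show "Q i \<in> sets (borel \<Otimes>\<^sub>M borel)"
      unfolding Q_def by (auto split: prod.splits intro!: pair_measureI)
  qed
  moreover have "g -` S \<inter> (C \<times> C) = U \<inter> (C \<times> C)"
  proof
    show "U \<inter> (C \<times> C) \<subseteq> g -` S \<inter> (C \<times> C)"
      unfolding U_def Q_def by (fastforce split: if_splits simp: subset_iff)
    show "g -` S \<inter> (C \<times> C) \<subseteq> U \<inter> (C \<times> C)"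
    proof
      fix p assume "p \<in> g -` S \<inter> (C \<times> C)"
      then obtain x y where xy: "(x, y) \<in> g -` S" "x \<in> C" "y \<in> C" and p: "p = (x, y)" by (cases p) auto
      have "open (g -` S)" using g S by (simp add: open_vimage)
      then obtain e where e: "e > 0" "ball (x, y) e \<subseteq> g -` S"
        using xy open_contains_ball by blast
      obtain n where n: "r n < e / 4"
      proof -
        obtain n where "n \<noteq> 0" "inverse (real n) < e / 4" using real_arch_inverse e by (metis zero_less_divide_iff zero_less_numeral)
        then have "r n < e / 4" unfolding r_def
          by (smt (verit, ccfv_SIG) le_imp_inverse_le of_nat_0_less_iff of_nat_Suc of_nat_le_iff inverse_eq_divide le_SucI bot_nat_0.not_eq_extremum dual_order.refl)
        then show ?thesis using that by blast
      qed
      have rpos: "r n > 0" unfolding r_def by simp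
      obtain d1 where d1: "d1 \<in> D" "dist d1 x < r n" using C xy(2) closure_approachable rpos by blast
      obtain d2 where d2: "d2 \<in> D" "dist d2 y < r n" using C xy(3) closure_approachable rpos by blast
      have sub: "ball d1 (r n) \<times> ball d2 (r n) \<subseteq> g -` S"
      proof clarify
        fix a b assume ab: "a \<in> ball d1 (r n)" "b \<in> ball d2 (r n)"
        have "dist x a < 2 * r n" using ab d1 by (metis dist_commute dist_triangle_lt mem_ball mult_2 add_strict_mono)
        moreover have "dist y b < 2 * r n" using ab d2 by (metis dist_commute dist_triangle_lt mem_ball mult_2 add_strict_mono)
        ultimately have "dist (x, y) (a, b) < e"
          using n dist_Pair_Pair[of x y a b] sqrt_sum_squares_le_sum_abs[of "dist x a" "dist y b"]
          by simp
        then show "(a, b) \<in> g -` S" using e by auto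
      qed
      have "(x, y) \<in> Q (d1, d2, n)" unfolding Q_def using sub d1 d2 by (auto simp: dist_commute)
      then show "p \<in> U \<inter> (C \<times> C)" unfolding U_def p using d1 d2 xy by blast
    qed
  qed
  ultimately show ?thesis by blast
qed

lemma meas_restr:
  fixes D C :: "'b::real_normed_vector set" and g :: "'b \<times> 'b \<Rightarrow> 'c::topological_space"
  assumes D: "countable D" and C: "C \<subseteq> closure D" and g: "continuous_on UNIV g"
  shows "g \<in> borel_measurable (restrict_space (borel \<Otimes>\<^sub>M borel) (C \<times> C))"
proof (rule borel_measurableI)
  fix S :: "'c set" assume "open S"
  from rect_approx[OF D C g this] obtain U where
    U: "U \<in> sets (borel \<Otimes>\<^sub>M borel)" "g -` S \<inter> (C \<times> C) = U \<inter> (C \<times> C)" by blast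
  show "g -` S \<inter> space (restrict_space (borel \<Otimes>\<^sub>M borel) (C \<times> C))
        \<in> sets (restrict_space (borel \<Otimes>\<^sub>M borel) (C \<times> C))"
    unfolding sets_restrict_space space_restrict_space using U
    by (auto simp: space_pair_measure)
qed

locale kern =
  fixes D C :: "'b::banach set" and Rk Vk :: "'s::topological_space \<Rightarrow> 'b measure" and \<gamma> :: real
  assumes D: "countable D" and C_def: "C = closure D"
  and Rk: "Rk \<in> borel \<rightarrow>\<^sub>M prob_algebra borel" and Vk: "Vk \<in> borel \<rightarrow>\<^sub>M prob_algebra borel"
  and RC: "\<And>s. AE x in Rk s. x \<in> C" and VC: "\<And>s. AE x in Vk s. x \<in> C"
begin

definition g :: "'b \<times> 'b \<Rightarrow> 'b" where "g = (\<lambda>(r, v). r + \<gamma> *\<^sub>R v)"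
definition M where "M s = Rk s \<Otimes>\<^sub>M Vk s"
definition K where "K s = distr (completion (M s)) borel g"
definition psi :: "('b \<Rightarrow> ennreal) \<Rightarrow> 'b \<times> 'b \<Rightarrow> ennreal"
  where "psi \<phi> x = \<phi> (g x) * indicator (C \<times> C) x"

lemma g_cont: "continuous_on UNIV g"
  unfolding g_def by (auto intro!: continuous_intros simp: split_beta)

lemma C_closed: "closed C" unfolding C_def by simp

lemma CC_sets: "C \<times> C \<in> sets (borel \<Otimes>\<^sub>M borel)"
  using C_closed by (auto intro!: pair_measureI borel_closed)

lemma R_prob: "prob_space (Rk s)" "sets (Rk s) = sets borel"
  using measurable_space[OF Rk, of s] by (auto simp: space_prob_algebra)
lemma V_prob: "prob_space (Vk s)" "sets (Vk s) = sets borel"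
  using measurable_space[OF Vk, of s] by (auto simp: space_prob_algebra)

lemma sets_M: "sets (M s) = sets (borel \<Otimes>\<^sub>M borel)"
  unfolding M_def using R_prob V_prob by (intro sets_pair_measure_cong) auto

lemma space_M: "space (M s) = UNIV"
  using sets_eq_imp_space_eq[OF sets_M[of s]] by (simp add: space_pair_measure)

lemma M_prob: "prob_space (M s)"
  unfolding M_def using R_prob V_prob by (simp add: prob_space_pair)

lemma AE_CC: "AE x in M s. x \<in> C \<times> C"
proof -
  interpret R: prob_space "Rk s" by (rule R_prob)
  interpret V: prob_space "Vk s" by (rule V_prob)
  interpret pair_sigma_finite "Rk s" "Vk s" ..
  have "{x \<in> space (Rk s \<Otimes>\<^sub>M Vk s). x \<in> C \<times> C} \<in> sets (Rk s \<Otimes>\<^sub>M Vk s)"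
    using CC_sets sets_M[of s] space_M[of s] unfolding M_def by simp
  moreover have "AE x in Rk s. AE y in Vk s. (x, y) \<in> C \<times> C"
    by (rule eventually_mono[OF RC[of s]], rule eventually_mono[OF VC[of s]]) auto
  ultimately show ?thesis unfolding M_def by (rule AE_pair_measure)
qed

lemma g_restr: "g \<in> borel_measurable (restrict_space (borel \<Otimes>\<^sub>M borel) (C \<times> C))"
  using meas_restr[OF D _ g_cont] C_def by simp

lemma g_meas: "g \<in> completion (M s) \<rightarrow>\<^sub>M borel"
proof (rule measurableI)
  show "g x \<in> space borel" for x by simp
  fix X :: "'b set" assume X: "X \<in> sets borel"
  have "g -` X \<inter> space (restrict_space (borel \<Otimes>\<^sub>M borel) (C \<times> C))
        \<in> sets (restrict_space (borel \<Otimes>\<^sub>M borel) (C \<times> C))"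
    using measurable_sets[OF g_restr X] .
  then have A: "g -` X \<inter> (C \<times> C) \<in> sets (M s)"
    using CC_sets sets_M[of s]
    by (simp add: sets_restrict_space_iff space_pair_measure)
  obtain N where N: "{x \<in> space (M s). \<not> x \<in> C \<times> C} \<subseteq> N" "N \<in> null_sets (M s)"
    using AE_CC[of s] by (auto elim!: AE_E)
  show "g -` X \<inter> space (completion (M s)) \<in> sets (completion (M s))"
  proof (rule sets_completionI)
    show "g -` X \<inter> space (completion (M s)) = (g -` X \<inter> (C \<times> C)) \<union> (g -` X - C \<times> C)"
      using space_M[of s] by auto
    show "g -` X - C \<times> C \<subseteq> N" using N space_M[of s] by auto
  qed (use N A in auto)
qed

lemma psi_meas:
  assumes "\<phi> \<in> borel_measurable borel"
  shows "psi \<phi> \<in> borel_measurable (borel \<Otimes>\<^sub>M borel)"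
proof -
  have "(\<lambda>x. \<phi> (g x)) \<in> borel_measurable (restrict_space (borel \<Otimes>\<^sub>M borel) (C \<times> C))"
    using measurable_comp[OF g_restr assms] by (simp add: comp_def)
  then show ?thesis unfolding psi_def
    using CC_sets by (subst (asm) borel_measurable_restrict_space_iff_ennreal) (auto simp: space_pair_measure)
qed

lemma psi_meas_M:
  assumes "\<phi> \<in> borel_measurable borel"
  shows "psi \<phi> \<in> borel_measurable (M s)"
  using psi_meas[OF assms] measurable_cong_sets[OF sets_M[of s] refl] by blast

lemma nn_K:
  assumes "\<phi> \<in> borel_measurable borel"
  shows "(\<integral>\<^sup>+x. \<phi> x \<partial>K s) = (\<integral>\<^sup>+x. psi \<phi> x \<partial>M s)"
proof -
  have "(\<integral>\<^sup>+x. \<phi> x \<partial>K s) = (\<integral>\<^sup>+x. \<phi> (g x) \<partial>completion (M s))"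
    unfolding K_def by (rule nn_integral_distr[OF g_meas]) (simp add: assms)
  also have "\<dots> = (\<integral>\<^sup>+x. psi \<phi> x \<partial>completion (M s))"
    using AE_completion[OF AE_CC[of s]] by (intro nn_integral_cong_AE) (auto simp: psi_def elim!: eventually_mono)
  also have "\<dots> = (\<integral>\<^sup>+x. psi \<phi> x \<partial>M s)"
    by (rule nn_integral_completion)
  finally show ?thesis .
qed


lemma M_kernel: "M \<in> borel \<rightarrow>\<^sub>M subprob_algebra (borel \<Otimes>\<^sub>M borel)"
  unfolding M_def[abs_def]
  by (rule measurable_pair_measure[OF measurable_prob_algebraD[OF Rk] measurable_prob_algebraD[OF Vk]])

lemma K_prob: "prob_space (K s)"
  unfolding K_def
  by (rule prob_space.prob_space_distr[OF prob_space.prob_space_completion[OF M_prob] g_meas])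

lemma sets_K: "sets (K s) = sets borel" unfolding K_def by simp

lemma nn_K_meas:
  assumes "\<phi> \<in> borel_measurable borel"
  shows "(\<lambda>s. \<integral>\<^sup>+x. \<phi> x \<partial>K s) \<in> borel_measurable borel"
proof -
  have "(\<lambda>s. \<integral>\<^sup>+x. psi \<phi> x \<partial>M s) \<in> borel_measurable borel"
    using measurable_compose[OF M_kernel nn_integral_measurable_subprob_algebra[OF psi_meas[OF assms]]] .
  then show ?thesis using nn_K[OF assms] by simp
qed

lemma K_kernel: "K \<in> borel \<rightarrow>\<^sub>M subprob_algebra borel"
proof (rule measurable_subprob_algebra)
  show "subprob_space (K s)" for s using K_prob prob_space_imp_subprob_space by blast
  show "sets (K s) = sets borel" for s by (rule sets_K)
  fix A :: "'b set" assume A: "A \<in> sets borel"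
  have "(\<lambda>s. \<integral>\<^sup>+x. indicator A x \<partial>K s) \<in> borel_measurable borel"
    by (rule nn_K_meas) (use A in simp)
  moreover have "(\<integral>\<^sup>+x. indicator A x \<partial>K s) = emeasure (K s) A" for s
    using A sets_K[of s] by (intro nn_integral_indicator) simp
  ultimately show "(\<lambda>s. emeasure (K s) A) \<in> borel_measurable borel" by simp
qed

definition I :: "('b \<Rightarrow> ennreal) \<Rightarrow> 's \<Rightarrow> 'b \<Rightarrow> ennreal"
  where "I \<phi> s r = (\<integral>\<^sup>+v. psi \<phi> (r, v) \<partial>Vk s)"

lemma tonelli:
  assumes "\<phi> \<in> borel_measurable borel"
  shows "(\<integral>\<^sup>+r. I \<phi> s r \<partial>Rk s) = (\<integral>\<^sup>+x. \<phi> x \<partial>K s)"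
proof -
  interpret V: prob_space "Vk s" by (rule V_prob)
  have "psi \<phi> \<in> borel_measurable (Rk s \<Otimes>\<^sub>M Vk s)" using psi_meas_M[OF assms] unfolding M_def .
  from V.nn_integral_fst[OF this] show ?thesis unfolding I_def nn_K[OF assms] M_def by simp
qed

lemma I_meas:
  assumes "\<phi> \<in> borel_measurable borel"
  shows "I \<phi> s \<in> borel_measurable (Rk s)"
proof -
  interpret V: prob_space "Vk s" by (rule V_prob)
  have "psi \<phi> \<in> borel_measurable (Rk s \<Otimes>\<^sub>M Vk s)" using psi_meas_M[OF assms] unfolding M_def .
  from V.borel_measurable_nn_integral_fst[OF this] show ?thesis unfolding I_def by simp
qed

lemma II_meas:
  assumes "\<phi> \<in> borel_measurable borel"
  shows "(\<lambda>s. \<integral>\<^sup>+r. I \<phi> s r \<partial>Rk s) \<in> borel_measurable borel"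
  using nn_K_meas[OF assms] tonelli[OF assms] by simp

lemma nn_Z:
  assumes "\<phi> \<in> borel_measurable borel" and P: "sets P = sets borel"
  shows "(\<integral>\<^sup>+x. \<phi> x \<partial>(P \<bind> K)) = (\<integral>\<^sup>+s. \<integral>\<^sup>+r. I \<phi> s r \<partial>Rk s \<partial>P)"
proof -
  have KP: "K \<in> P \<rightarrow>\<^sub>M subprob_algebra borel"
    using K_kernel measurable_cong_sets[OF P refl] by blast
  show ?thesis
    unfolding nn_integral_bind[OF assms(1) KP] tonelli[OF assms(1)] ..
qed

lemma I_C:
  "r \<in> C \<Longrightarrow> I \<phi> s r = (\<integral>\<^sup>+v. \<phi> (r + \<gamma> *\<^sub>R v) \<partial>Vk s)"
  unfolding I_def psi_def g_def
  by (intro nn_integral_cong_AE, rule eventually_mono[OF VC[of s]]) auto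

lemma I_notC:
  "r \<notin> C \<Longrightarrow> I \<phi> s r = 0"
  unfolding I_def psi_def by simp

lemma fin_AE:
  assumes "\<phi> \<in> borel_measurable borel" and P: "sets P = sets borel"
    and fin: "(\<integral>\<^sup>+x. \<phi> x \<partial>(P \<bind> K)) \<noteq> \<infinity>"
  shows "AE s in P. AE r in Rk s. I \<phi> s r \<noteq> \<infinity>"
proof -
  have "AE s in P. (\<integral>\<^sup>+r. I \<phi> s r \<partial>Rk s) \<noteq> \<infinity>"
    using fin unfolding nn_Z[OF assms(1,2)]
    by (intro nn_integral_PInf_AE) (use II_meas[OF assms(1)] measurable_cong_sets[OF P refl] in auto)
  then show ?thesis
    by (rule eventually_mono) (intro nn_integral_PInf_AE I_meas assms(1))
qed

end


lemma enn_ineq1: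
  fixes x1 y1 x2 y2 :: ennreal
  assumes "x1 \<noteq> \<infinity>" "y1 \<noteq> \<infinity>" "x2 \<noteq> \<infinity>" "y2 \<noteq> \<infinity>" "0 \<le> c"
    "enn2real x1 - enn2real y1 - (enn2real x2 - enn2real y2) \<le> c"
  shows "x1 + y2 \<le> ennreal c + y1 + x2"
  using assms
  by (cases x1; cases y1; cases x2; cases y2)
     (auto simp: ennreal_plus[symmetric] ennreal_le_iff simp del: ennreal_plus)

lemma enn_ineq2:
  fixes a1 b1 a2 b2 c :: real
  assumes "0 \<le> a1" "0 \<le> b1" "0 \<le> a2" "0 \<le> b2" "0 \<le> c"
    "ennreal a1 + ennreal b2 \<le> ennreal c + ennreal b1 + ennreal a2"
  shows "a1 - b1 - (a2 - b2) \<le> c"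
  using assms
  by (auto simp: ennreal_plus[symmetric] ennreal_le_iff simp del: ennreal_plus)



lemma main:
  fixes F :: "'b::banach \<Rightarrow> real" and P :: "'s::topological_space measure"
  assumes k1: "kern D C Rk V1k" and k2: "kern D C Rk V2k"
    and Pp: "prob_space P" and Ps: "sets P = sets borel"
    and F: "continuous_on UNIV F"
    and int1: "integrable (P \<bind> kern.K Rk V1k \<gamma>) F"
    and int2: "integrable (P \<bind> kern.K Rk V2k \<gamma>) F"
    and c: "0 \<le> c"
    and H: "\<And>s r. integrable (V1k s) (\<lambda>v. F (r + \<gamma> *\<^sub>R v)) \<Longrightarrow>
               integrable (V2k s) (\<lambda>v. F (r + \<gamma> *\<^sub>R v)) \<Longrightarrow>
               (\<integral>v. F (r + \<gamma> *\<^sub>R v) \<partial>V1k s) - (\<integral>v. F (r + \<gamma> *\<^sub>R v) \<partial>V2k s) \<le> c"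
  shows "(\<integral>x. F x \<partial>(P \<bind> kern.K Rk V1k \<gamma>)) - (\<integral>x. F x \<partial>(P \<bind> kern.K Rk V2k \<gamma>)) \<le> c"
proof -
  interpret k1: kern D C Rk V1k \<gamma> by (rule k1)
  interpret k2: kern D C Rk V2k \<gamma> by (rule k2)
  interpret P: prob_space P by (rule Pp)
  define Fp where "Fp = (\<lambda>x. ennreal (F x))"
  define Fn where "Fn = (\<lambda>x. ennreal (- F x))"
  have Fm: "F \<in> borel_measurable borel" using F by (rule borel_measurable_continuous_onI)
  have Fpm: "Fp \<in> borel_measurable borel" unfolding Fp_def using Fm by measurable
  have Fnm: "Fn \<in> borel_measurable borel" unfolding Fn_def using Fm by measurable
  obtain a1 b1 where ab1: "0 \<le> a1" "0 \<le> b1" "(\<integral>\<^sup>+x. Fp x \<partial>(P \<bind> k1.K)) = ennreal a1"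
    "(\<integral>\<^sup>+x. Fn x \<partial>(P \<bind> k1.K)) = ennreal b1" "(\<integral>x. F x \<partial>(P \<bind> k1.K)) = a1 - b1"
    using integrableE[OF int1] unfolding Fp_def Fn_def by metis
  obtain a2 b2 where ab2: "0 \<le> a2" "0 \<le> b2" "(\<integral>\<^sup>+x. Fp x \<partial>(P \<bind> k2.K)) = ennreal a2"
    "(\<integral>\<^sup>+x. Fn x \<partial>(P \<bind> k2.K)) = ennreal b2" "(\<integral>x. F x \<partial>(P \<bind> k2.K)) = a2 - b2"
    using integrableE[OF int2] unfolding Fp_def Fn_def by metis
  have f1p: "AE s in P. AE r in Rk s. k1.I Fp s r \<noteq> \<infinity>"
    using ab1 by (intro k1.fin_AE[OF Fpm Ps]) simp
  have f1n: "AE s in P. AE r in Rk s. k1.I Fn s r \<noteq> \<infinity>"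
    using ab1 by (intro k1.fin_AE[OF Fnm Ps]) simp
  have f2p: "AE s in P. AE r in Rk s. k2.I Fp s r \<noteq> \<infinity>"
    using ab2 by (intro k2.fin_AE[OF Fpm Ps]) simp
  have f2n: "AE s in P. AE r in Rk s. k2.I Fn s r \<noteq> \<infinity>"
    using ab2 by (intro k2.fin_AE[OF Fnm Ps]) simp
  have pw: "AE s in P. AE r in Rk s.
      k1.I Fp s r + k2.I Fn s r \<le> ennreal c + k1.I Fn s r + k2.I Fp s r"
    using f1p f1n f2p f2n
  proof eventually_elim
    case (elim s)
    from elim k1.RC[of s] show ?case
    proof eventually_elim
      case (elim r)
      show ?case
      proof (cases "r \<in> C")
        case False
        then show ?thesis by (simp add: k1.I_notC k2.I_notC)
      next
        case True
        define h where "h = (\<lambda>v. F (r + \<gamma> *\<^sub>R v))"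
        have hm: "h \<in> borel_measurable borel" unfolding h_def
          by (intro borel_measurable_continuous_onI continuous_on_compose2[OF F]) (auto intro!: continuous_intros)
        have e1p: "k1.I Fp s r = (\<integral>\<^sup>+v. ennreal (h v) \<partial>V1k s)" using True
          by (simp add: k1.I_C Fp_def h_def)
        have e1n: "k1.I Fn s r = (\<integral>\<^sup>+v. ennreal (- h v) \<partial>V1k s)" using True
          by (simp add: k1.I_C Fn_def h_def)
        have e2p: "k2.I Fp s r = (\<integral>\<^sup>+v. ennreal (h v) \<partial>V2k s)" using True
          by (simp add: k2.I_C Fp_def h_def)
        have e2n: "k2.I Fn s r = (\<integral>\<^sup>+v. ennreal (- h v) \<partial>V2k s)" using True
          by (simp add: k2.I_C Fn_def h_def)
        have hm1: "h \<in> borel_measurable (V1k s)"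
          using hm measurable_cong_sets[OF k1.V_prob(2)[of s] refl] by blast
        have hm2: "h \<in> borel_measurable (V2k s)"
          using hm measurable_cong_sets[OF k2.V_prob(2)[of s] refl] by blast
        have i1: "integrable (V1k s) h"
          unfolding real_integrable_def using hm1 elim e1p e1n by simp
        have i2: "integrable (V2k s) h"
          unfolding real_integrable_def using hm2 elim e2p e2n by simp
        have "(\<integral>v. h v \<partial>V1k s) - (\<integral>v. h v \<partial>V2k s) \<le> c"
          using H[of s r] i1 i2 unfolding h_def by simp
        then have "enn2real (k1.I Fp s r) - enn2real (k1.I Fn s r)
                   - (enn2real (k2.I Fp s r) - enn2real (k2.I Fn s r)) \<le> c"
          unfolding e1p e1n e2p e2n real_lebesgue_integral_def[OF i1] real_lebesgue_integral_def[OF i2] .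
        from enn_ineq1[OF _ _ _ _ c this] elim show ?thesis by (simp add: add_ac)
      qed
    qed
  qed
  define T1p where "T1p s = (\<integral>\<^sup>+r. k1.I Fp s r \<partial>Rk s)" for s
  define T1n where "T1n s = (\<integral>\<^sup>+r. k1.I Fn s r \<partial>Rk s)" for s
  define T2p where "T2p s = (\<integral>\<^sup>+r. k2.I Fp s r \<partial>Rk s)" for s
  define T2n where "T2n s = (\<integral>\<^sup>+r. k2.I Fn s r \<partial>Rk s)" for s
  have pw2: "AE s in P. T1p s + T2n s \<le> ennreal c + T1n s + T2p s"
    using pw
  proof eventually_elim
    case (elim s)
    interpret R: prob_space "Rk s" by (rule k1.R_prob)
    have "T1p s + T2n s = (\<integral>\<^sup>+r. k1.I Fp s r + k2.I Fn s r \<partial>Rk s)"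
      unfolding T1p_def T2n_def
      by (rule nn_integral_add[symmetric]) (auto intro: k1.I_meas k2.I_meas Fpm Fnm)
    also have "\<dots> \<le> (\<integral>\<^sup>+r. ennreal c + k1.I Fn s r + k2.I Fp s r \<partial>Rk s)"
      by (rule nn_integral_mono_AE[OF elim])
    also have "\<dots> = (\<integral>\<^sup>+r. ennreal c \<partial>Rk s) + T1n s + T2p s"
      unfolding T1n_def T2p_def
      using k1.I_meas[OF Fnm, of s] k2.I_meas[OF Fpm, of s] by (simp add: nn_integral_add)
    also have "(\<integral>\<^sup>+r. ennreal c \<partial>Rk s) = ennreal c"
      by (simp add: R.emeasure_space_1)
    finally show ?case .
  qed
  have Tm: "T1p \<in> borel_measurable P" "T1n \<in> borel_measurable P"
           "T2p \<in> borel_measurable P" "T2n \<in> borel_measurable P"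
    unfolding T1p_def[abs_def] T1n_def[abs_def] T2p_def[abs_def] T2n_def[abs_def]
    using k1.II_meas[OF Fpm] k1.II_meas[OF Fnm] k2.II_meas[OF Fpm] k2.II_meas[OF Fnm]
      measurable_cong_sets[OF Ps refl] by auto
  have "ennreal a1 + ennreal b2 = (\<integral>\<^sup>+s. T1p s + T2n s \<partial>P)"
    unfolding ab1(3)[symmetric] ab2(4)[symmetric] k1.nn_Z[OF Fpm Ps] k2.nn_Z[OF Fnm Ps]
      T1p_def T2n_def
    by (rule nn_integral_add[symmetric]) (use Tm in \<open>auto simp: T1p_def[abs_def] T2n_def[abs_def]\<close>)
  also have "\<dots> \<le> (\<integral>\<^sup>+s. ennreal c + T1n s + T2p s \<partial>P)"
    by (rule nn_integral_mono_AE[OF pw2])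
  also have "\<dots> = (\<integral>\<^sup>+s. ennreal c \<partial>P) + (\<integral>\<^sup>+s. T1n s \<partial>P) + (\<integral>\<^sup>+s. T2p s \<partial>P)"
    using Tm by (simp add: nn_integral_add)
  also have "\<dots> = ennreal c + ennreal b1 + ennreal a2"
    unfolding ab1(4)[symmetric] ab2(3)[symmetric] k1.nn_Z[OF Fnm Ps] k2.nn_Z[OF Fpm Ps]
      T1n_def T2p_def
    by (simp add: P.emeasure_space_1)
  finally have "ennreal a1 + ennreal b2 \<le> ennreal c + ennreal b1 + ennreal a2" .
  from enn_ineq2[OF ab1(1,2) ab2(1,2) c this] show ?thesis
    unfolding ab1(5) ab2(5) by simp
qed

theorem theorem4:
  fixes Act :: "'a::banach set"
    and X :: "('a \<times> 's::{banach, second_countable_topology}) set"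
    and B0 :: "'b::banach set"
    and P :: "'s \<Rightarrow> 'a \<Rightarrow> 's measure"
    and R :: "'s \<Rightarrow> 'a \<Rightarrow> 's \<Rightarrow> 'b measure"
    and V1 V2 :: "'s \<Rightarrow> 'a \<Rightarrow> 'b measure"
    and \<pi> :: "'s \<Rightarrow> 'a"
    and \<gamma> :: real
  assumes Act_compact: "compact Act"
    and X_sub: "X \<subseteq> Act \<times> UNIV"
    and X_closed: "closed X"
    and B0_separable: "\<exists>D. countable D \<and> D \<subseteq> B0 \<and> B0 \<subseteq> closure D"
    and P_prob: "\<And>a s. (a, s) \<in> X \<Longrightarrow> prob_space (P s a) \<and> sets (P s a) = sets borel"
    and R_prob: "\<And>a s s'. (a, s) \<in> X \<Longrightarrow>
                   prob_space (R s a s') \<and> sets (R s a s') = sets borel \<and>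
                   (AE x in R s a s'. x \<in> B0)"
    and R_kernel: "\<And>a s. (a, s) \<in> X \<Longrightarrow> (\<lambda>s'. R s a s') \<in> borel \<rightarrow>\<^sub>M prob_algebra borel"
    and \<pi>_feasible: "\<And>s'. (\<pi> s', s') \<in> X"
    and \<gamma>: "0 \<le> \<gamma>" "\<gamma> < 1"
    and V1_prob: "\<And>a s. (a, s) \<in> X \<Longrightarrow>
                   prob_space (V1 s a) \<and> sets (V1 s a) = sets borel \<and> (AE x in V1 s a. x \<in> B0)"
    and V2_prob: "\<And>a s. (a, s) \<in> X \<Longrightarrow>
                   prob_space (V2 s a) \<and> sets (V2 s a) = sets borel \<and> (AE x in V2 s a. x \<in> B0)"
    and V1_kernel: "(\<lambda>s'. V1 s' (\<pi> s')) \<in> borel \<rightarrow>\<^sub>M prob_algebra borel"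
    and V2_kernel: "(\<lambda>s'. V2 s' (\<pi> s')) \<in> borel \<rightarrow>\<^sub>M prob_algebra borel"
  shows "(SUP (a, s) \<in> X. dBL (Zlaw P R V1 \<pi> \<gamma> s a) (Zlaw P R V2 \<pi> \<gamma> s a))
           \<le> ereal \<gamma> * (SUP (a, s) \<in> X. dBL (V1 s a) (V2 s a))"
proof -
  obtain D0 where D0: "countable D0" "D0 \<subseteq> B0" "B0 \<subseteq> closure D0" using B0_separable by blast
  define C where "C = closure D0"
  define DD where "DD = (SUP (a, s) \<in> X. dBL (V1 s a) (V2 s a))"
  have dBL_nonneg: "0 \<le> dBL U W" if "prob_space U" "prob_space W" for U W :: "'b measure"
  proof -
    have "(\<lambda>_. 0::real) \<in> {f. 1-lipschitz_on UNIV f \<and> integrable U f \<and> integrable W f}"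
      by (auto intro: lipschitz_on_mono[OF lipschitz_on_constant])
    then have "ereal ((\<integral>x. 0 \<partial>U) - (\<integral>x. 0 \<partial>W)) \<le> dBL U W"
      unfolding dBL_def by (rule SUP_upper)
    then show ?thesis by (simp add: zero_ereal_def)
  qed
  have Vle: "dBL (V1 s' (\<pi> s')) (V2 s' (\<pi> s')) \<le> DD" for s'
    unfolding DD_def using \<pi>_feasible[of s']
    by (rule SUP_upper2) simp
  have DD0: "0 \<le> DD"
    using dBL_nonneg[of "V1 undefined (\<pi> undefined)" "V2 undefined (\<pi> undefined)"]
      V1_prob[OF \<pi>_feasible] V2_prob[OF \<pi>_feasible] Vle[of undefined] by auto
  have key: "dBL (Zlaw P R V1 \<pi> \<gamma> s a) (Zlaw P R V2 \<pi> \<gamma> s a) \<le> ereal \<gamma> * DD"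
    if as: "(a, s) \<in> X" for a s
  proof (cases "\<gamma> > 0 \<and> DD = \<infinity>")
    case True
    then show ?thesis by simp
  next
    case False
    obtain c where c: "0 \<le> c" "ereal c \<le> ereal \<gamma> * DD"
      and Hc: "\<And>s' r F. 1-lipschitz_on UNIV F \<Longrightarrow>
               integrable (V1 s' (\<pi> s')) (\<lambda>v. F (r + \<gamma> *\<^sub>R v)) \<Longrightarrow>
               integrable (V2 s' (\<pi> s')) (\<lambda>v. F (r + \<gamma> *\<^sub>R v)) \<Longrightarrow>
               (\<integral>v. F (r + \<gamma> *\<^sub>R v) \<partial>V1 s' (\<pi> s')) - (\<integral>v. F (r + \<gamma> *\<^sub>R v) \<partial>V2 s' (\<pi> s')) \<le> c"
    proof (cases "\<gamma> = 0")
      case True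
      show ?thesis
      proof (rule that[of 0])
        show "ereal 0 \<le> ereal \<gamma> * DD" using True by (simp add: zero_ereal_def[symmetric])
        fix s' r and F :: "'b \<Rightarrow> real"
        interpret V1: prob_space "V1 s' (\<pi> s')" using V1_prob[OF \<pi>_feasible] by blast
        interpret V2: prob_space "V2 s' (\<pi> s')" using V2_prob[OF \<pi>_feasible] by blast
        show "(\<integral>v. F (r + \<gamma> *\<^sub>R v) \<partial>V1 s' (\<pi> s')) - (\<integral>v. F (r + \<gamma> *\<^sub>R v) \<partial>V2 s' (\<pi> s')) \<le> 0"
          using True by (simp add: V1.prob_space V2.prob_space)
      qed simp
    next
      case gne: False
      then have gpos: "\<gamma> > 0" using \<gamma> by simp
      with False have "DD \<noteq> \<infinity>" by simp
      with DD0 obtain d where d: "DD = ereal d" "0 \<le> d" by (cases DD) auto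
      show ?thesis
      proof (rule that[of "\<gamma> * d"])
        show "0 \<le> \<gamma> * d" using d \<gamma> by simp
        show "ereal (\<gamma> * d) \<le> ereal \<gamma> * DD" using d by simp
        fix s' r and F :: "'b \<Rightarrow> real"
        assume L: "1-lipschitz_on UNIV F"
          and i1: "integrable (V1 s' (\<pi> s')) (\<lambda>v. F (r + \<gamma> *\<^sub>R v))"
          and i2: "integrable (V2 s' (\<pi> s')) (\<lambda>v. F (r + \<gamma> *\<^sub>R v))"
        define h where "h = (\<lambda>v. F (r + \<gamma> *\<^sub>R v) / \<gamma>)"
        have "1-lipschitz_on UNIV h"
        proof (rule lipschitz_onI)
          fix x y :: 'b
          have "dist (F (r + \<gamma> *\<^sub>R x)) (F (r + \<gamma> *\<^sub>R y)) \<le> 1 * dist (r + \<gamma> *\<^sub>R x) (r + \<gamma> *\<^sub>R y)"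
            using lipschitz_onD[OF L] by blast
          also have "dist (r + \<gamma> *\<^sub>R x) (r + \<gamma> *\<^sub>R y) = \<gamma> * dist x y"
            using gpos by (simp add: dist_norm scaleR_diff_right[symmetric])
          finally have "\<bar>F (r + \<gamma> *\<^sub>R x) - F (r + \<gamma> *\<^sub>R y)\<bar> \<le> \<gamma> * dist x y"
            by (simp add: dist_real_def)
          then show "dist (h x) (h y) \<le> 1 * dist x y"
            using gpos unfolding h_def dist_real_def
            by (simp add: diff_divide_distrib[symmetric] pos_divide_le_eq mult.commute)
        qed simp
        moreover have "integrable (V1 s' (\<pi> s')) h" "integrable (V2 s' (\<pi> s')) h"
          unfolding h_def using i1 i2 by auto
        ultimately have "ereal ((\<integral>v. h v \<partial>V1 s' (\<pi> s')) - (\<integral>v. h v \<partial>V2 s' (\<pi> s')))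
            \<le> dBL (V1 s' (\<pi> s')) (V2 s' (\<pi> s'))"
          unfolding dBL_def by (intro SUP_upper) simp
        also have "\<dots> \<le> ereal d" using Vle[of s'] d by simp
        finally have "((\<integral>v. F (r + \<gamma> *\<^sub>R v) \<partial>V1 s' (\<pi> s')) - (\<integral>v. F (r + \<gamma> *\<^sub>R v) \<partial>V2 s' (\<pi> s'))) / \<gamma> \<le> d"
          unfolding h_def by (simp add: diff_divide_distrib)
        then show "(\<integral>v. F (r + \<gamma> *\<^sub>R v) \<partial>V1 s' (\<pi> s')) - (\<integral>v. F (r + \<gamma> *\<^sub>R v) \<partial>V2 s' (\<pi> s')) \<le> \<gamma> * d"
          using gpos by (simp add: divide_le_eq mult.commute)
      qed
    qed
    have kR: "AE x in R s a s'. x \<in> C" for s'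
      using R_prob[OF as, of s'] D0 unfolding C_def by (auto elim!: eventually_mono)
    have k1: "kern D0 C (\<lambda>s'. R s a s') (\<lambda>s'. V1 s' (\<pi> s'))"
    proof
      show "AE x in V1 s' (\<pi> s'). x \<in> C" for s'
        using V1_prob[OF \<pi>_feasible[of s']] D0 unfolding C_def by (auto elim!: eventually_mono)
    qed (use D0 C_def R_kernel[OF as] V1_kernel kR in auto)
    have k2: "kern D0 C (\<lambda>s'. R s a s') (\<lambda>s'. V2 s' (\<pi> s'))"
    proof
      show "AE x in V2 s' (\<pi> s'). x \<in> C" for s'
        using V2_prob[OF \<pi>_feasible[of s']] D0 unfolding C_def by (auto elim!: eventually_mono)
    qed (use D0 C_def R_kernel[OF as] V2_kernel kR in auto)
    have Z1: "Zlaw P R V1 \<pi> \<gamma> s a = P s a \<bind> kern.K (\<lambda>s'. R s a s') (\<lambda>s'. V1 s' (\<pi> s')) \<gamma>"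
      unfolding Zlaw_def kern.K_def[OF k1, abs_def] kern.M_def[OF k1] kern.g_def[OF k1] ..
    have Z2: "Zlaw P R V2 \<pi> \<gamma> s a = P s a \<bind> kern.K (\<lambda>s'. R s a s') (\<lambda>s'. V2 s' (\<pi> s')) \<gamma>"
      unfolding Zlaw_def kern.K_def[OF k2, abs_def] kern.M_def[OF k2] kern.g_def[OF k2] ..
    show ?thesis
      unfolding dBL_def
    proof (rule SUP_least, clarify)
      fix F :: "'b \<Rightarrow> real"
      assume L: "1-lipschitz_on UNIV F" and i1: "integrable (Zlaw P R V1 \<pi> \<gamma> s a) F"
        and i2: "integrable (Zlaw P R V2 \<pi> \<gamma> s a) F"
      have "(\<integral>x. F x \<partial>Zlaw P R V1 \<pi> \<gamma> s a) - (\<integral>x. F x \<partial>Zlaw P R V2 \<pi> \<gamma> s a) \<le> c"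
        unfolding Z1 Z2
      proof (rule main[OF k1 k2])
        show "prob_space (P s a)" "sets (P s a) = sets borel" using P_prob[OF as] by auto
        show "continuous_on UNIV F" using L by (rule lipschitz_on_continuous_on)
      qed (use i1 i2 Z1 Z2 c Hc[OF L] in auto)
      then show "ereal ((\<integral>x. F x \<partial>Zlaw P R V1 \<pi> \<gamma> s a) - (\<integral>x. F x \<partial>Zlaw P R V2 \<pi> \<gamma> s a)) \<le> ereal \<gamma> * DD"
        using c(2) by (meson ereal_less_eq(3) order_trans)
    qed
  qed
  show ?thesis
    unfolding DD_def[symmetric] by (rule SUP_least) (use key in auto)
qed

end
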